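(* Let $\alpha_1,\dots,\alpha_4$ be given constants, $H=H(t,t^-,q,q^-,p,p^-)$ a smooth delay Hamiltonian, and $X=\xi(t,q,p)\partial_t+\eta(t,q,p)\partial_q+\nu(t,q,p)\partial_p$ a generator such that the Hamiltonian is invariant, i.e. $$\Omega:=\nu^{-}(\alpha_{1}\dot{q}+\alpha_{2}\dot{q}^{-})+p^{-}(\alpha_{1}D(\eta)+\alpha_{2}D(\eta^{-}))+\nu(\alpha_{3}\dot{q}+\alpha_{4}\dot{q}^{-})+p(\alpha_{3}D(\eta)+\alpha_{4}D(\eta^{-}))+(\alpha_{2}p^{-}+\alpha_{4}p)\dot{q}^{-}D(\xi-\xi^{-})-\xi H_t-\eta H_q-\nu H_p-\xi^{-}H_{t^-}-\eta^{-}H_{q^-}-\nu^{-}H_{p^-}-HD(\xi)=0.$$ Then on the solutions of the local extremal equation $$F_H=\xi\frac{\delta\tilde H}{\delta t}+\eta\frac{\delta\tilde H}{\delta q}+\nu\frac{\delta\tilde H}{\delta p}=0$$ the differential-difference relation $D(C)=(S_+-1)P$ holds, where $C=\eta(\alpha_{4}p^{+}+(\alpha_{2}+\alpha_{3})p+\alpha_{1}p^{-})-\xi\big(\alpha_{2}(p\dot{q}-p^{-}\dot{q}^{-})+\alpha_{4}(p^{+}\dot{q}-p\dot{q}^{-})+H\big)$ and $P=(\alpha_{2}p^{-}+\alpha_{4}p)D(\eta^{-})+\nu^{-}(\alpha_{1}\dot{q}+\alpha_{2}\dot{q}^{-})-(\alpha_{2}p^{-}+\alpha_{4}p)\dot{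q}^{-}D(\xi^{-})-\xi^{-}H_{t^-}-\eta^{-}H_{q^-}-\nu^{-}H_{p^-}$.
   Context: Constant delay $\tau>0$; $t^\pm=t\pm\tau$, and $f^\pm=f(t\pm\tau)$ for functions of $t$; scalar dependent variables $q,p$. $S_\pm$ are the forward/backward shift operators on expressions (shifting all arguments by one step: $S_+$ sends $t^-,t,q^-,q,p^-,p,\dots$ to $t,t^+,q,q^+,p,p^+,\dots$); $\xi^\pm=S_\pm(\xi)$ etc.; $H^+=S_+(H)$. $D$ is the total derivative acting on variables at the points $t^-,t,t^+$ ($D=\partial_t+\dot q\partial_q+\dot p\partial_p+\ddot q\partial_{\dot q}+\cdots$ plus the analogous terms at $t^-$ and $t^+$). $\tilde H=p^{-}(\alpha_{1}\dot{q}+\alpha_{2}\dot{q}^{-})+p(\alpha_{3}\dot{q}+\alpha_{4}\dot{q}^{-})-H$, with $\frac{\delta\tilde H}{\delta p}=\alpha_1\dot q^++(\alpha_2+\alpha_3)\dot q+\alpha_4\dot q^--\partial_p(H+H^+)$, $\frac{\delta\tilde H}{\delta q}=-\big(\alpha_4\dot p^++(\alpha_2+\alpha_3)\dot p+\alpha_1\dot p^-+\partial_q(H+H^+)\big)$, $\frac{\delta\tilde H}{\delta t}=D[\alpha_2(p\dot q-p^-\dot q^-)+\alpha_4(p^+\dot q-p\dot q^-)]+D(H)-\partial_t(H+H^+)$. The equation is considered together with the delay equation $t^+-t=t-t^-=\tau$. The quantity $\Omega$ equals $X(\tilde H)+\tilde HD(\xi)$ for the prolonged generator. *)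

theory Defs
  imports "HOL-Analysis.Analysis"
begin

type_synonym ham = "real \<Rightarrow> real \<Rightarrow> real \<Rightarrow> real \<Rightarrow> real \<Rightarrow> real \<Rightarrow> real"
  (* H(t, t^-, q, q^-, p, p^-) *)
type_synonym coef = "real \<Rightarrow> real \<Rightarrow> real \<Rightarrow> real"
  (* xi(t, q, p), eta(t, q, p), nu(t, q, p) *)

definition dH_t :: "ham \<Rightarrow> ham" where
  "dH_t H a b c d e f = deriv (\<lambda>s. H s b c d e f) a"
definition dH_tm :: "ham \<Rightarrow> ham" where
  "dH_tm H a b c d e f = deriv (\<lambda>s. H a s c d e f) b"
definition dH_q :: "ham \<Rightarrow> ham" where
  "dH_q H a b c d e f = deriv (\<lambda>s. H a b s d e f) c"
definition dH_qm :: "ham \<Rightarrow> ham" where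
  "dH_qm H a b c d e f = deriv (\<lambda>s. H a b c s e f) d"
definition dH_p :: "ham \<Rightarrow> ham" where
  "dH_p H a b c d e f = deriv (\<lambda>s. H a b c d s f) e"
definition dH_pm :: "ham \<Rightarrow> ham" where
  "dH_pm H a b c d e f = deriv (\<lambda>s. H a b c d e s) f"

definition at6 :: "ham \<Rightarrow> real \<Rightarrow> (real \<Rightarrow> real) \<Rightarrow> (real \<Rightarrow> real) \<Rightarrow> real \<Rightarrow> real" where
  "at6 G tau q p t = G t (t - tau) (q t) (q (t - tau)) (p t) (p (t - tau))"

definition at3 :: "coef \<Rightarrow> (real \<Rightarrow> real) \<Rightarrow> (real \<Rightarrow> real) \<Rightarrow> real \<Rightarrow> real" where
  "at3 g q p t = g t (q t) (p t)"

definition Omega ::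
  "real \<Rightarrow> real \<Rightarrow> real \<Rightarrow> real \<Rightarrow> ham \<Rightarrow> coef \<Rightarrow> coef \<Rightarrow> coef \<Rightarrow> real
   \<Rightarrow> (real \<Rightarrow> real) \<Rightarrow> (real \<Rightarrow> real) \<Rightarrow> real \<Rightarrow> real" where
  "Omega a1 a2 a3 a4 H xi eta nu tau q p t =
     at3 nu q p (t - tau) * (a1 * deriv q t + a2 * deriv q (t - tau))
   + p (t - tau) * (a1 * deriv (at3 eta q p) t + a2 * deriv (\<lambda>s. at3 eta q p (s - tau)) t)
   + at3 nu q p t * (a3 * deriv q t + a4 * deriv q (t - tau))
   + p t * (a3 * deriv (at3 eta q p) t + a4 * deriv (\<lambda>s. at3 eta q p (s - tau)) t)
   + (a2 * p (t - tau) + a4 * p t) * deriv q (t - tau)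
       * deriv (\<lambda>s. at3 xi q p s - at3 xi q p (s - tau)) t
   - at3 xi q p t * at6 (dH_t H) tau q p t
   - at3 eta q p t * at6 (dH_q H) tau q p t
   - at3 nu q p t * at6 (dH_p H) tau q p t
   - at3 xi q p (t - tau) * at6 (dH_tm H) tau q p t
   - at3 eta q p (t - tau) * at6 (dH_qm H) tau q p t
   - at3 nu q p (t - tau) * at6 (dH_pm H) tau q p t
   - at6 H tau q p t * deriv (at3 xi q p) t"

definition varH_p ::
  "real \<Rightarrow> real \<Rightarrow> real \<Rightarrow> real \<Rightarrow> ham \<Rightarrow> real \<Rightarrow> (real \<Rightarrow> real) \<Rightarrow> (real \<Rightarrow> real) \<Rightarrow> real \<Rightarrow> real" where
  "varH_p a1 a2 a3 a4 H tau q p t =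
     a1 * deriv q (t + tau) + (a2 + a3) * deriv q t + a4 * deriv q (t - tau)
   - (at6 (dH_p H) tau q p t + at6 (dH_pm H) tau q p (t + tau))"

definition varH_q ::
  "real \<Rightarrow> real \<Rightarrow> real \<Rightarrow> real \<Rightarrow> ham \<Rightarrow> real \<Rightarrow> (real \<Rightarrow> real) \<Rightarrow> (real \<Rightarrow> real) \<Rightarrow> real \<Rightarrow> real" where
  "varH_q a1 a2 a3 a4 H tau q p t =
     - (a4 * deriv p (t + tau) + (a2 + a3) * deriv p t + a1 * deriv p (t - tau)
        + at6 (dH_q H) tau q p t + at6 (dH_qm H) tau q p (t + tau))"

definition varH_t ::
  "real \<Rightarrow> real \<Rightarrow> real \<Rightarrow> real \<Rightarrow> ham \<Rightarrow> real \<Rightarrow> (real \<Rightarrow> real) \<Rightarrow> (real \<Rightarrow> real) \<Rightarrow> real \<Rightarrow> real" where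
  "varH_t a1 a2 a3 a4 H tau q p t =
     deriv (\<lambda>s. a2 * (p s * deriv q s - p (s - tau) * deriv q (s - tau))
              + a4 * (p (s + tau) * deriv q s - p s * deriv q (s - tau))) t
   + deriv (at6 H tau q p) t
   - (at6 (dH_t H) tau q p t + at6 (dH_tm H) tau q p (t + tau))"

definition F_H ::
  "real \<Rightarrow> real \<Rightarrow> real \<Rightarrow> real \<Rightarrow> ham \<Rightarrow> coef \<Rightarrow> coef \<Rightarrow> coef \<Rightarrow> real
   \<Rightarrow> (real \<Rightarrow> real) \<Rightarrow> (real \<Rightarrow> real) \<Rightarrow> real \<Rightarrow> real" where
  "F_H a1 a2 a3 a4 H xi eta nu tau q p t =
     at3 xi q p t * varH_t a1 a2 a3 a4 H tau q p t
   + at3 eta q p t * varH_q a1 a2 a3 a4 H tau q p t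
   + at3 nu q p t * varH_p a1 a2 a3 a4 H tau q p t"

definition Cdens ::
  "real \<Rightarrow> real \<Rightarrow> real \<Rightarrow> real \<Rightarrow> ham \<Rightarrow> coef \<Rightarrow> coef \<Rightarrow> real
   \<Rightarrow> (real \<Rightarrow> real) \<Rightarrow> (real \<Rightarrow> real) \<Rightarrow> real \<Rightarrow> real" where
  "Cdens a1 a2 a3 a4 H xi eta tau q p t =
     at3 eta q p t * (a4 * p (t + tau) + (a2 + a3) * p t + a1 * p (t - tau))
   - at3 xi q p t * (a2 * (p t * deriv q t - p (t - tau) * deriv q (t - tau))
                     + a4 * (p (t + tau) * deriv q t - p t * deriv q (t - tau))
                     + at6 H tau q p t)"

definition Pflux ::
  "real \<Rightarrow> real \<Rightarrow> real \<Rightarrow> real \<Rightarrow> ham \<Rightarrow> coef \<Rightarrow> coef \<Rightarrow> coef \<Rightarrow> real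
   \<Rightarrow> (real \<Rightarrow> real) \<Rightarrow> (real \<Rightarrow> real) \<Rightarrow> real \<Rightarrow> real" where
  "Pflux a1 a2 a3 a4 H xi eta nu tau q p t =
     (a2 * p (t - tau) + a4 * p t) * deriv (\<lambda>s. at3 eta q p (s - tau)) t
   + at3 nu q p (t - tau) * (a1 * deriv q t + a2 * deriv q (t - tau))
   - (a2 * p (t - tau) + a4 * p t) * deriv q (t - tau) * deriv (\<lambda>s. at3 xi q p (s - tau)) t
   - at3 xi q p (t - tau) * at6 (dH_tm H) tau q p t
   - at3 eta q p (t - tau) * at6 (dH_qm H) tau q p t
   - at3 nu q p (t - tau) * at6 (dH_pm H) tau q p t"

end

theory Submission
  imports Defs
begin

lemma shp: "(\<And>t. (f has_real_derivative f' t) (at t)) \<Longrightarrow> ((\<lambda>s. f (s + c)) has_real_derivative f' (t + c)) (at t)"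
  using DERIV_shift by blast

lemma shm: "(\<And>t. (f has_real_derivative f' t) (at t)) \<Longrightarrow> ((\<lambda>s. f (s - c)) has_real_derivative f' (t - c)) (at t)"
  using DERIV_shift[of f "f' (t - c)" t "-c"] by simp

lemma diffs:
  assumes "\<And>t. q differentiable (at t)" "\<And>t. p differentiable (at t)"
    and xi_smooth: "\<And>x. (\<lambda>(a, b, c). xi a b c) differentiable (at x)"
  shows "at3 xi q p differentiable (at t)"
proof -
  have "(\<lambda>t. (t, q t, p t)) differentiable (at t)"
    using assms by (intro differentiable_Pair differentiable_ident) auto
  from differentiable_chain_at[OF this xi_smooth]
  show ?thesis by (simp add: at3_def[abs_def] o_def)
qed

lemma diffs6:
  assumes q: "\<And>t. q differentiable (at t)" and p: "\<And>t. p differentiable (at t)"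
    and H_smooth: "\<And>x. (\<lambda>(a, b, c, d, e, f). H a b c d e f) differentiable (at x)"
  shows "at6 H tau q p differentiable (at t)"
proof -
  have s: "(\<lambda>t. t - tau) differentiable (at t)" for t
    by (intro derivative_intros) 
  have qm: "(\<lambda>t. q (t - tau)) differentiable (at t)" for t
    using differentiable_chain_at[OF s q] by (simp add: o_def)
  have pm: "(\<lambda>t. p (t - tau)) differentiable (at t)" for t
    using differentiable_chain_at[OF s p] by (simp add: o_def)
  have "(\<lambda>t. (t, t - tau, q t, q (t - tau), p t, p (t - tau))) differentiable (at t)"
    using q p qm pm s by (intro differentiable_Pair differentiable_ident) auto
  from differentiable_chain_at[OF this H_smooth]
  show ?thesis by (simp add: at6_def[abs_def] o_def)
qed

theorem theorem5:
  fixes a1 a2 a3 a4 tau :: real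
    and H :: ham and xi eta nu :: coef
    and q p :: "real \<Rightarrow> real"
  assumes tau_pos: "tau > 0"
    and H_smooth: "\<And>x. (\<lambda>(a, b, c, d, e, f). H a b c d e f) differentiable (at x)"
    and xi_smooth: "\<And>x. (\<lambda>(a, b, c). xi a b c) differentiable (at x)"
    and eta_smooth: "\<And>x. (\<lambda>(a, b, c). eta a b c) differentiable (at x)"
    and nu_smooth: "\<And>x. (\<lambda>(a, b, c). nu a b c) differentiable (at x)"
    and q_diff: "\<And>t. q differentiable (at t)"
    and p_diff: "\<And>t. p differentiable (at t)"
    and q'_diff: "\<And>t. deriv q differentiable (at t)"
    and p'_diff: "\<And>t. deriv p differentiable (at t)"
    and invariant: "\<And>t. Omega a1 a2 a3 a4 H xi eta nu tau q p t = 0"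
    and extremal: "\<And>t. F_H a1 a2 a3 a4 H xi eta nu tau q p t = 0"
  shows "\<forall>t. deriv (Cdens a1 a2 a3 a4 H xi eta tau q p) t
           = Pflux a1 a2 a3 a4 H xi eta nu tau q p (t + tau)
             - Pflux a1 a2 a3 a4 H xi eta nu tau q p t"
proof
  fix t
  define X where "X = at3 xi q p"
  define E where "E = at3 eta q p"
  define N where "N = at3 nu q p"
  define G where "G = at6 H tau q p"
  define dq where "dq = deriv q"
  define ddq where "ddq = deriv dq"
  define dp where "dp = deriv p"
  define dX where "dX = deriv X"
  define dE where "dE = deriv E"
  define dG where "dG = deriv G"
  have Dq: "\<And>t. (q has_real_derivative dq t) (at t)"
    using q_diff DERIV_deriv_iff_real_differentiable dq_def by blast
  have Ddq: "\<And>t. (dq has_real_derivative ddq t) (at t)"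
    using q'_diff DERIV_deriv_iff_real_differentiable dq_def ddq_def by blast
  have Dp: "\<And>t. (p has_real_derivative dp t) (at t)"
    using p_diff DERIV_deriv_iff_real_differentiable dp_def by blast
  have DX: "\<And>t. (X has_real_derivative dX t) (at t)"
    using diffs[OF q_diff p_diff xi_smooth] DERIV_deriv_iff_real_differentiable X_def dX_def by blast
  have DE: "\<And>t. (E has_real_derivative dE t) (at t)"
    using diffs[OF q_diff p_diff eta_smooth] DERIV_deriv_iff_real_differentiable E_def dE_def by blast
  have DG: "\<And>t. (G has_real_derivative dG t) (at t)"
    using diffs6[OF q_diff p_diff H_smooth] DERIV_deriv_iff_real_differentiable G_def dG_def by blast
  note sh = shp[OF Dq] shm[OF Dq] shp[OF Ddq] shm[OF Ddq] shp[OF Dp] shm[OF Dp]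
    shm[OF DX] shm[OF DE]
  have dEm: "\<And>x. deriv (\<lambda>s. E (s - tau)) x = dE (x - tau)"
    by (rule DERIV_imp_deriv, rule shm[OF DE])
  have dXm: "\<And>x. deriv (\<lambda>s. X (s - tau)) x = dX (x - tau)"
    by (rule DERIV_imp_deriv, rule shm[OF DX])
  have dXd: "deriv (\<lambda>s. X s - X (s - tau)) t = dX t - dX (t - tau)"
    by (rule DERIV_imp_deriv, intro DERIV_diff DX shm[OF DX])
  have dA: "deriv (\<lambda>s. a2 * (p s * dq s - p (s - tau) * dq (s - tau))
              + a4 * (p (s + tau) * dq s - p s * dq (s - tau))) t
     = a2 * (dp t * dq t + p t * ddq t - dp (t - tau) * dq (t - tau) - p (t - tau) * ddq (t - tau))
       + a4 * (dp (t + tau) * dq t + p (t + tau) * ddq t - dp t * dq (t - tau) - p t * ddq (t - tau))"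
    by (rule DERIV_imp_deriv) (auto intro!: derivative_eq_intros sh Dq Ddq Dp simp: algebra_simps)
  have Ceq: "Cdens a1 a2 a3 a4 H xi eta tau q p = (\<lambda>t.
     E t * (a4 * p (t + tau) + (a2 + a3) * p t + a1 * p (t - tau))
   - X t * (a2 * (p t * dq t - p (t - tau) * dq (t - tau))
                     + a4 * (p (t + tau) * dq t - p t * dq (t - tau))
                     + G t))"
    by (rule ext) (simp add: Cdens_def X_def E_def G_def dq_def)
  have dC: "deriv (Cdens a1 a2 a3 a4 H xi eta tau q p) t =
     dE t * (a4 * p (t + tau) + (a2 + a3) * p t + a1 * p (t - tau))
   + E t * (a4 * dp (t + tau) + (a2 + a3) * dp t + a1 * dp (t - tau))
   - dX t * (a2 * (p t * dq t - p (t - tau) * dq (t - tau))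
                     + a4 * (p (t + tau) * dq t - p t * dq (t - tau))
                     + G t)
   - X t * (a2 * (dp t * dq t + p t * ddq t - dp (t - tau) * dq (t - tau) - p (t - tau) * ddq (t - tau))
       + a4 * (dp (t + tau) * dq t + p (t + tau) * ddq t - dp t * dq (t - tau) - p t * ddq (t - tau))
       + dG t)"
    unfolding Ceq
    by (rule DERIV_imp_deriv) (auto intro!: derivative_eq_intros sh Dq Ddq Dp DX DE DG simp: algebra_simps)
  have O: "Omega a1 a2 a3 a4 H xi eta nu tau q p t = 0" by (rule invariant)
  have F: "F_H a1 a2 a3 a4 H xi eta nu tau q p t = 0" by (rule extremal)
  have O': "N (t - tau) * (a1 * dq t + a2 * dq (t - tau))
   + p (t - tau) * (a1 * dE t + a2 * dE (t - tau))
   + N t * (a3 * dq t + a4 * dq (t - tau))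
   + p t * (a3 * dE t + a4 * dE (t - tau))
   + (a2 * p (t - tau) + a4 * p t) * dq (t - tau) * (dX t - dX (t - tau))
   - X t * at6 (dH_t H) tau q p t
   - E t * at6 (dH_q H) tau q p t
   - N t * at6 (dH_p H) tau q p t
   - X (t - tau) * at6 (dH_tm H) tau q p t
   - E (t - tau) * at6 (dH_qm H) tau q p t
   - N (t - tau) * at6 (dH_pm H) tau q p t
   - G t * dX t = 0"
    using O unfolding Omega_def X_def[symmetric] E_def[symmetric] N_def[symmetric] G_def[symmetric]
      dq_def[symmetric] dX_def[symmetric] dE_def[symmetric]
    by (simp add: dEm dXd)
  have F': "X t * (a2 * (dp t * dq t + p t * ddq t - dp (t - tau) * dq (t - tau) - p (t - tau) * ddq (t - tau))
       + a4 * (dp (t + tau) * dq t + p (t + tau) * ddq t - dp t * dq (t - tau) - p t * ddq (t - tau))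
       + dG t - (at6 (dH_t H) tau q p t + at6 (dH_tm H) tau q p (t + tau)))
   + E t * (- (a4 * dp (t + tau) + (a2 + a3) * dp t + a1 * dp (t - tau)
        + at6 (dH_q H) tau q p t + at6 (dH_qm H) tau q p (t + tau)))
   + N t * (a1 * dq (t + tau) + (a2 + a3) * dq t + a4 * dq (t - tau)
   - (at6 (dH_p H) tau q p t + at6 (dH_pm H) tau q p (t + tau))) = 0"
    using F unfolding F_H_def varH_t_def varH_q_def varH_p_def
      X_def[symmetric] E_def[symmetric] N_def[symmetric] G_def[symmetric]
      dq_def[symmetric] dp_def[symmetric] dG_def[symmetric]
    using dA by simp
  have P1: "Pflux a1 a2 a3 a4 H xi eta nu tau q p (t + tau) =
     (a2 * p t + a4 * p (t + tau)) * dE t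
   + N t * (a1 * dq (t + tau) + a2 * dq t)
   - (a2 * p t + a4 * p (t + tau)) * dq t * dX t
   - X t * at6 (dH_tm H) tau q p (t + tau)
   - E t * at6 (dH_qm H) tau q p (t + tau)
   - N t * at6 (dH_pm H) tau q p (t + tau)"
    unfolding Pflux_def X_def[symmetric] E_def[symmetric] N_def[symmetric]
      dq_def[symmetric]
    by (simp add: dEm dXm)
  have P0: "Pflux a1 a2 a3 a4 H xi eta nu tau q p t =
     (a2 * p (t - tau) + a4 * p t) * dE (t - tau)
   + N (t - tau) * (a1 * dq t + a2 * dq (t - tau))
   - (a2 * p (t - tau) + a4 * p t) * dq (t - tau) * dX (t - tau)
   - X (t - tau) * at6 (dH_tm H) tau q p t
   - E (t - tau) * at6 (dH_qm H) tau q p t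
   - N (t - tau) * at6 (dH_pm H) tau q p t"
    unfolding Pflux_def X_def[symmetric] E_def[symmetric] N_def[symmetric]
      dq_def[symmetric]
    by (simp add: dEm dXm)
  show "deriv (Cdens a1 a2 a3 a4 H xi eta tau q p) t
           = Pflux a1 a2 a3 a4 H xi eta nu tau q p (t + tau)
             - Pflux a1 a2 a3 a4 H xi eta nu tau q p t"
    unfolding dC P1 P0 using O' F' by (simp add: algebra_simps)
qed

end
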